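(* If $(d,p)\in\{(6,1),(10,2),(13,3),(14,3),(17,4)\}$, then $\varphi$ has a unique critical point in the interior of $K$ (namely $\mathbf{z}^*$).
   Context: Let $\tau_j=\binom{d}{p}\binom{p}{j}\binom{d-p}{p-j}$ for $0\le j\le p$. Points of $\mathbb{R}^{4p+1}$ are written $\mathbf{z}=(z,(z_{j00},z_{j01},z_{j10},z_{j11})_{j\in[p]})$, with $z_{0\alpha\alpha}=z-\sum_{j\in[p]}z_{j\alpha\alpha}$ ($\alpha\in\{0,1\}$) and $z_{0\alpha\beta}=\frac12-z-\sum_{j\in[p]}z_{j\alpha\beta}$ ($\alpha\ne\beta$). $K$ is the set of $\mathbf{z}$ with $0\le z\le\frac12$ and $z_{j\alpha\beta}\ge0$ for all $0\le j\le p$, $\alpha,\beta\in\{0,1\}$. $A(\mathbf{z})=p+(d-4p)z+\sum_{j\in[p]}j(z_{j00}+z_{j11}-z_{j01}-z_{j10})$, $B=\frac d2-A$, and $\varphi(\mathbf{z})=A\log A+B\log B+\sum_{0\le j\le p,\ \alpha,\beta\in\{0,1\}}(z_{j\alpha\beta}\log\tau_j-z_{j\alpha\beta}\log z_{j\alpha\beta})$. A critical point is a point of the interior of $K$ where the gradient of $\varphi$ vanishes. $\mathbf{z}^*$ has $z^*=\frac14$ and $z^*_{j\alpha\beta}=\tau_j/(4\binom{d}{p}^2)$. *)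

theory Defs
  imports "HOL-Analysis.Analysis"
begin

text \<open>Points of R^(4p+1) are represented by a real z together with a function
  w :: nat => bool => bool => real, where w j a b is the coordinate z_{j a b}
  for j in {1..p}; the bits a, b in {0,1} are encoded as False = 0, True = 1.
  Values of w outside j in {1..p} are irrelevant.\<close>

definition tau :: "nat \<Rightarrow> nat \<Rightarrow> nat \<Rightarrow> real" where
  "tau d p j = real (d choose p) * real (p choose j) * real ((d - p) choose (p - j))"

definition zc :: "nat \<Rightarrow> real \<Rightarrow> (nat \<Rightarrow> bool \<Rightarrow> bool \<Rightarrow> real) \<Rightarrow> nat \<Rightarrow> bool \<Rightarrow> bool \<Rightarrow> real" where
  "zc p z w j a b =
     (if j = 0 then
        (if a = b then z - (\<Sum>i\<in>{1..p}. w i a b)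
         else 1/2 - z - (\<Sum>i\<in>{1..p}. w i a b))
      else w j a b)"

definition inK :: "nat \<Rightarrow> real \<Rightarrow> (nat \<Rightarrow> bool \<Rightarrow> bool \<Rightarrow> real) \<Rightarrow> bool" where
  "inK p z w \<longleftrightarrow> 0 \<le> z \<and> z \<le> 1/2 \<and> (\<forall>j\<in>{0..p}. \<forall>a b. 0 \<le> zc p z w j a b)"

definition interiorK :: "nat \<Rightarrow> real \<Rightarrow> (nat \<Rightarrow> bool \<Rightarrow> bool \<Rightarrow> real) \<Rightarrow> bool" where
  "interiorK p z w \<longleftrightarrow> (\<exists>e>0. \<forall>z' w'. \<bar>z' - z\<bar> < e \<and>
      (\<forall>j\<in>{1..p}. \<forall>a b. \<bar>w' j a b - w j a b\<bar> < e) \<longrightarrow> inK p z' w')"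

definition Afun :: "nat \<Rightarrow> nat \<Rightarrow> real \<Rightarrow> (nat \<Rightarrow> bool \<Rightarrow> bool \<Rightarrow> real) \<Rightarrow> real" where
  "Afun d p z w = real p + (real d - 4 * real p) * z +
     (\<Sum>j\<in>{1..p}. real j * (w j False False + w j True True - w j False True - w j True False))"

definition Bfun :: "nat \<Rightarrow> nat \<Rightarrow> real \<Rightarrow> (nat \<Rightarrow> bool \<Rightarrow> bool \<Rightarrow> real) \<Rightarrow> real" where
  "Bfun d p z w = real d / 2 - Afun d p z w"

definition phi :: "nat \<Rightarrow> nat \<Rightarrow> real \<Rightarrow> (nat \<Rightarrow> bool \<Rightarrow> bool \<Rightarrow> real) \<Rightarrow> real" where
  "phi d p z w = Afun d p z w * ln (Afun d p z w) + Bfun d p z w * ln (Bfun d p z w) +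
     (\<Sum>j\<in>{0..p}. \<Sum>a\<in>UNIV. \<Sum>b\<in>UNIV.
        zc p z w j a b * ln (tau d p j) - zc p z w j a b * ln (zc p z w j a b))"

definition upd :: "(nat \<Rightarrow> bool \<Rightarrow> bool \<Rightarrow> real) \<Rightarrow> nat \<Rightarrow> bool \<Rightarrow> bool \<Rightarrow> real \<Rightarrow> (nat \<Rightarrow> bool \<Rightarrow> bool \<Rightarrow> real)" where
  "upd w j a b t = w(j := (w j)(a := (w j a)(b := t)))"

text \<open>Critical point: interior point at which the gradient of phi vanishes,
  i.e. all 4p+1 partial derivatives exist and are zero.\<close>
definition critical :: "nat \<Rightarrow> nat \<Rightarrow> real \<Rightarrow> (nat \<Rightarrow> bool \<Rightarrow> bool \<Rightarrow> real) \<Rightarrow> bool" where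
  "critical d p z w \<longleftrightarrow> interiorK p z w \<and>
     ((\<lambda>t. phi d p t w) has_real_derivative 0) (at z) \<and>
     (\<forall>j\<in>{1..p}. \<forall>a b. ((\<lambda>t. phi d p z (upd w j a b t)) has_real_derivative 0) (at (w j a b)))"

end

theory Submission
  imports Defs
begin

definition sg :: "bool \<Rightarrow> bool \<Rightarrow> real" where "sg a b = (if a = b then 1 else -1)"

lemma sum_upd:
  assumes "j \<in> {1..p}"
  shows "(\<Sum>l\<in>{1..p}. upd w j a b t l a' b') = (\<Sum>l\<in>{1..p}. w l a' b') + (if a' = a \<and> b' = b then t - w j a b else 0)"
proof -
  have "\<And>l. upd w j a b t l a' b' = w l a' b' + (if l = j then (if a' = a \<and> b' = b then t - w j a b else 0) else 0)"
    by (auto simp: upd_def)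
  then have "(\<Sum>l\<in>{1..p}. upd w j a b t l a' b') = (\<Sum>l\<in>{1..p}. w l a' b') + (\<Sum>l\<in>{1..p}. (if l = j then (if a' = a \<and> b' = b then t - w j a b else 0) else 0))"
    by (simp add: sum.distrib)
  also have "(\<Sum>l\<in>{1..p}. (if l = j then (if a' = a \<and> b' = b then t - w j a b else 0) else 0)) = (if a' = a \<and> b' = b then t - w j a b else 0)"
    using assms by (subst sum.delta) auto
  finally show ?thesis .
qed

lemma zc_upd:
  assumes "j \<in> {1..p}"
  shows "zc p z (upd w j a b t) i a' b' = zc p z w i a' b' + (t - w j a b) *
     ((if i = j \<and> a' = a \<and> b' = b then 1 else 0) - (if i = 0 \<and> a' = a \<and> b' = b then 1 else 0))"
proof -
  have u: "\<And>l. upd w j a b t l a' b' = (if l = j \<and> a' = a \<and> b' = b then t else w l a' b')"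
    by (auto simp: upd_def)
  show ?thesis
    unfolding zc_def sum_upd[OF assms] using assms by (auto simp: u)
qed

lemma zc_shiftz:
  "zc p t w i a' b' = zc p z w i a' b' + (t - z) * (if i = 0 then sg a' b' else 0)"
  by (auto simp: zc_def sg_def)

lemma Afun_shiftz: "Afun d p t w = Afun d p z w + (t - z) * (real d - 4 * real p)"
  by (simp add: Afun_def algebra_simps)

lemma Afun_upd:
  assumes "j \<in> {1..p}"
  shows "Afun d p z (upd w j a b t) = Afun d p z w + (t - w j a b) * (real j * sg a b)"
proof -
  have "\<And>l. real l * (upd w j a b t l False False + upd w j a b t l True True - upd w j a b t l False True - upd w j a b t l True False)
     = real l * (w l False False + w l True True - w l False True - w l True False) + (if l = j then (t - w j a b) * (real j * sg a b) else 0)"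
    by (cases a; cases b) (auto simp: upd_def sg_def algebra_simps)
  then have "(\<Sum>l\<in>{1..p}. real l * (upd w j a b t l False False + upd w j a b t l True True - upd w j a b t l False True - upd w j a b t l True False))
     = (\<Sum>l\<in>{1..p}. real l * (w l False False + w l True True - w l False True - w l True False)) + (\<Sum>l\<in>{1..p}. (if l = j then (t - w j a b) * (real j * sg a b) else 0))"
    by (simp add: sum.distrib)
  also have "(\<Sum>l\<in>{1..p}. (if l = j then (t - w j a b) * (real j * sg a b) else 0)) = (t - w j a b) * (real j * sg a b)"
    using assms by (subst sum.delta) auto
  finally show ?thesis by (simp add: Afun_def)
qed

lemma deriv_xlnx:
  assumes "0 < c"
  shows "((\<lambda>t. (c + (t - t0) * e) * ln (c + (t - t0) * e)) has_real_derivative e * (ln c + 1)) (at t0)"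
  using assms by (auto intro!: derivative_eq_intros simp: field_simps)

lemma deriv_H:
  assumes "0 < c"
  shows "((\<lambda>t. (c + (t - t0) * e) * Lc - (c + (t - t0) * e) * ln (c + (t - t0) * e)) has_real_derivative e * (Lc - ln c - 1)) (at t0)"
proof -
  have "((\<lambda>t. (c + (t - t0) * e) * Lc) has_real_derivative e * Lc) (at t0)"
    by (auto intro!: derivative_eq_intros)
  from DERIV_diff[OF this deriv_xlnx[OF assms]]
  have X: "((\<lambda>t. (c + (t - t0) * e) * Lc - (c + (t - t0) * e) * ln (c + (t - t0) * e)) has_real_derivative e * Lc - e * (ln c + 1)) (at t0)" .
  have eqD: "e * Lc - e * (ln c + 1) = e * (Lc - ln c - 1)" by (simp add: algebra_simps)
  show ?thesis using X unfolding eqD .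
qed

lemma L_deriv:
  assumes hA: "\<And>t. Afun d p (Z t) (W t) = A0 + (t - t0) * al"
    and hc: "\<And>t i a b. zc p (Z t) (W t) i a b = c i a b + (t - t0) * e i a b"
    and A0: "0 < A0" and B0: "0 < real d / 2 - A0" and cpos: "\<And>i a b. i \<in> {0..p} \<Longrightarrow> 0 < c i a b"
  shows "((\<lambda>t. phi d p (Z t) (W t)) has_real_derivative
     (al * (ln A0 - ln (real d / 2 - A0)) + (\<Sum>i\<in>{0..p}. \<Sum>a\<in>UNIV. \<Sum>b\<in>UNIV. e i a b * (ln (tau d p i) - ln (c i a b) - 1)))) (at t0)"
proof -
  have eq: "(\<lambda>t. phi d p (Z t) (W t)) = (\<lambda>t. (A0 + (t - t0) * al) * ln (A0 + (t - t0) * al)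
     + ((real d / 2 - A0) + (t - t0) * (- al)) * ln ((real d / 2 - A0) + (t - t0) * (- al))
     + (\<Sum>i\<in>{0..p}. \<Sum>a\<in>UNIV. \<Sum>b\<in>UNIV. (c i a b + (t - t0) * e i a b) * ln (tau d p i) - (c i a b + (t - t0) * e i a b) * ln (c i a b + (t - t0) * e i a b)))"
  proof
    fix t
    have bb: "real d / 2 - (A0 + (t - t0) * al) = (real d / 2 - A0) + (t - t0) * (- al)" by simp
    show "phi d p (Z t) (W t) = (A0 + (t - t0) * al) * ln (A0 + (t - t0) * al)
     + ((real d / 2 - A0) + (t - t0) * (- al)) * ln ((real d / 2 - A0) + (t - t0) * (- al))
     + (\<Sum>i\<in>{0..p}. \<Sum>a\<in>UNIV. \<Sum>b\<in>UNIV. (c i a b + (t - t0) * e i a b) * ln (tau d p i) - (c i a b + (t - t0) * e i a b) * ln (c i a b + (t - t0) * e i a b))"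
      unfolding phi_def Bfun_def hA hc bb by (rule refl)
  qed
  have s: "((\<lambda>t. \<Sum>i\<in>{0..p}. \<Sum>a\<in>UNIV. \<Sum>b\<in>UNIV. (c i a b + (t - t0) * e i a b) * ln (tau d p i) - (c i a b + (t - t0) * e i a b) * ln (c i a b + (t - t0) * e i a b))
      has_real_derivative (\<Sum>i\<in>{0..p}. \<Sum>a\<in>UNIV. \<Sum>b\<in>UNIV. e i a b * (ln (tau d p i) - ln (c i a b) - 1))) (at t0)"
    by (intro DERIV_sum deriv_H cpos) auto
  have "((\<lambda>t. phi d p (Z t) (W t)) has_real_derivative (al * (ln A0 + 1) + (- al) * (ln (real d / 2 - A0) + 1)
     + (\<Sum>i\<in>{0..p}. \<Sum>a\<in>UNIV. \<Sum>b\<in>UNIV. e i a b * (ln (tau d p i) - ln (c i a b) - 1)))) (at t0)"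
    unfolding eq by (intro DERIV_add deriv_xlnx s A0 B0)
  then show ?thesis by (simp add: algebra_simps)
qed

lemma int_pos:
  assumes "interiorK p z w"
  shows "0 < z \<and> z < 1/2 \<and> (\<forall>j\<in>{0..p}. \<forall>a b. 0 < zc p z w j a b)"
proof -
  obtain e where e: "e > 0" and H: "\<And>z' w'. \<bar>z' - z\<bar> < e \<Longrightarrow>
      (\<forall>j\<in>{1..p}. \<forall>a b. \<bar>w' j a b - w j a b\<bar> < e) \<Longrightarrow> inK p z' w'"
    using assms unfolding interiorK_def by blast
  have K1: "inK p (z - e/2) w" by (rule H) (use e in auto)
  have K2: "inK p (z + e/2) w" by (rule H) (use e in auto)
  have z1: "0 < z" using K1 e by (simp add: inK_def)
  have z2: "z < 1/2" using K2 e by (simp add: inK_def)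
  have c: "0 < zc p z w j a b" if j: "j \<in> {0..p}" for j a b
  proof (cases "j = 0")
    case True
    show ?thesis
    proof (cases "a = b")
      case True
      have "0 \<le> zc p (z - e/2) w 0 a b" using K1 by (simp add: inK_def)
      then show ?thesis using True \<open>j = 0\<close> e by (simp add: zc_def)
    next
      case False
      have "0 \<le> zc p (z + e/2) w 0 a b" using K2 by (simp add: inK_def)
      then show ?thesis using False \<open>j = 0\<close> e by (simp add: zc_def)
    qed
  next
    case False
    then have j1: "j \<in> {1..p}" using j by auto
    have "inK p z (upd w j a b (w j a b - e/2))"
    proof (rule H)
      show "\<forall>j'\<in>{1..p}. \<forall>a' b'. \<bar>upd w j a b (w j a b - e / 2) j' a' b' - w j' a' b'\<bar> < e"
        using e by (auto simp: upd_def)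
    qed (use e in auto)
    then have "0 \<le> zc p z (upd w j a b (w j a b - e/2)) j a b" using j by (simp add: inK_def)
    then show ?thesis using j1 e False by (simp add: zc_upd)
  qed
  show ?thesis using z1 z2 c by blast
qed

lemma tau_pos:
  assumes "j \<le> p" "2 * p \<le> d"
  shows "0 < tau d p j"
  using assms by (simp add: tau_def zero_less_binomial_iff)

lemma tau_sum:
  assumes "2 * p \<le> d"
  shows "(\<Sum>j\<in>{0..p}. tau d p j) = real (d choose p) ^ 2"
proof -
  have v0: "(\<Sum>k\<in>{0..p}. (p choose k) * ((d - p) choose (p - k))) = d choose p"
    using vandermonde[of p "d - p" p] assms by (simp add: atMost_atLeast0)
  have v: "(\<Sum>k\<in>{0..p}. real (p choose k) * real ((d - p) choose (p - k))) = real (d choose p)"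
    using arg_cong[OF v0, of real] by (simp only: of_nat_sum of_nat_mult)
  have "(\<Sum>j\<in>{0..p}. tau d p j) = real (d choose p) * (\<Sum>k\<in>{0..p}. real (p choose k) * real ((d - p) choose (p - k)))"
    by (simp add: tau_def sum_distrib_left mult.assoc)
  also have "\<dots> = real (d choose p) ^ 2" by (simp add: v power2_eq_square)
  finally show ?thesis .
qed

lemma sum_jw_le:
  assumes "\<And>j. j \<in> {1..p} \<Longrightarrow> 0 < f j"
  shows "0 \<le> (\<Sum>j\<in>{1..p}. real j * f j) \<and> (\<Sum>j\<in>{1..p}. real j * f j) \<le> real p * (\<Sum>j\<in>{1..p}. f j)"
proof
  show "0 \<le> (\<Sum>j\<in>{1..p}. real j * f j)" using assms by (intro sum_nonneg) (auto simp: less_imp_le)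
  have "(\<Sum>j\<in>{1..p}. real j * f j) \<le> (\<Sum>j\<in>{1..p}. real p * f j)"
    using assms by (intro sum_mono mult_right_mono) (auto simp: less_imp_le)
  then show "(\<Sum>j\<in>{1..p}. real j * f j) \<le> real p * (\<Sum>j\<in>{1..p}. f j)" by (simp add: sum_distrib_left)
qed

lemma AB_pos:
  assumes z1: "0 < z" and z2: "z < 1/2" and c: "\<forall>j\<in>{0..p}. \<forall>a b. 0 < zc p z w j a b" and dp: "2 * p < d"
  shows "0 < Afun d p z w \<and> 0 < real d / 2 - Afun d p z w"
proof -
  define s where "s a b = (\<Sum>j\<in>{1..p}. w j a b)" for a b
  define q where "q a b = (\<Sum>j\<in>{1..p}. real j * w j a b)" for a b
  have wpos: "0 < w j a b" if "j \<in> {1..p}" for j a b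
  proof -
    have "0 < zc p z w j a b" using c that by auto
    then show ?thesis using that by (simp add: zc_def)
  qed
  have q: "0 \<le> q a b \<and> q a b \<le> real p * s a b" for a b
    unfolding q_def s_def by (rule sum_jw_le) (use wpos in auto)
  have s1: "s a a < z" for a using c[rule_format, of 0 a a] by (simp add: zc_def s_def)
  have s2: "s a b < 1/2 - z" if "a \<noteq> b" for a b using c[rule_format, of 0 a b] that by (simp add: zc_def s_def)
  have A: "Afun d p z w = real p + (real d - 4 * real p) * z + q False False + q True True - q False True - q True False"
    by (simp add: Afun_def q_def sum.distrib sum_subtractf right_diff_distrib distrib_left)
  have m1: "real p * s False True \<le> real p / 2 - real p * z" using s2[of False True] mult_left_mono[of "s False True" "1/2 - z" "real p"] by (simp add: algebra_simps)
  have m2: "real p * s True False \<le> real p / 2 - real p * z" using s2[of True False] mult_left_mono[of "s True False" "1/2 - z" "real p"] by (simp add: algebra_simps)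
  have m3: "real p * s False False \<le> real p * z" using s1[of False] by (intro mult_left_mono) auto
  have m4: "real p * s True True \<le> real p * z" using s1[of True] by (intro mult_left_mono) auto
  have d2: "2 * real p < real d" using dp by linarith
  have p1: "0 < (real d - 2 * real p) * z" using d2 z1 by (intro mult_pos_pos) auto
  have p2: "0 < (real d - 2 * real p) * (1/2 - z)" using d2 z2 by (intro mult_pos_pos) auto
  have p1': "0 < real d * z - 2 * (real p * z)" using p1 by (simp add: algebra_simps)
  have p2': "0 < real d / 2 - real d * z - real p + 2 * (real p * z)" using p2 by (simp add: algebra_simps)
  have A': "Afun d p z w = real p + real d * z - 4 * (real p * z) + q False False + q True True - q False True - q True False"
    using A by (simp add: algebra_simps)
  have "0 < Afun d p z w"
    using A' q[of False True] q[of True False] q[of False False] q[of True True] m1 m2 p1' by linarith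
  moreover have "0 < real d / 2 - Afun d p z w"
    using A' q[of False True] q[of True False] q[of False False] q[of True True] m3 m4 p2' by linarith
  ultimately show ?thesis by blast
qed

lemma alg_final:
  fixes bt D E Y A yy d p :: real
  assumes "bt * D = Y / 2" "Y * A = p * Y + bt * E" "A = yy * (d / 2 - A)" "Y \<noteq> 0"
  shows "yy * d * D = (1 + yy) * (2 * p * D + E)"
  using assms by algebra

lemma exp_eq:
  fixes x u s1 s2 q :: real
  assumes "0 < x" "0 < u" "0 < s1" "0 < s2" "ln x = ln u + ln s1 - ln s2 + q"
  shows "x = u * s1 / s2 * exp q"
proof -
  have "x = exp (ln x)" using assms(1) by simp
  also have "\<dots> = exp (ln u + ln s1 - ln s2 + q)" using assms(5) by (rule arg_cong)
  also have "\<dots> = exp (ln u) * exp (ln s1) / exp (ln s2) * exp q" by (simp add: exp_add exp_diff)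
  also have "\<dots> = u * s1 / s2 * exp q" using assms by simp
  finally show ?thesis .
qed

lemma sum3_delta:
  assumes "k \<in> S" "finite S"
  shows "(\<Sum>i\<in>S. \<Sum>a'\<in>(UNIV::bool set). \<Sum>b'\<in>(UNIV::bool set). (if i = k \<and> a' = a \<and> b' = b then 1 else 0) * h i a' b') = (h k a b :: real)"
proof -
  have "\<And>i. (\<Sum>a'\<in>(UNIV::bool set). \<Sum>b'\<in>(UNIV::bool set). (if i = k \<and> a' = a \<and> b' = b then 1 else 0) * h i a' b') = (if i = k then h k a b else 0)"
    by (cases a; cases b) (auto simp: UNIV_bool)
  then show ?thesis using assms by (simp add: sum.delta)
qed

lemma sum_z_delta:
  assumes "finite S" "0 \<in> S"
  shows "(\<Sum>i\<in>S. \<Sum>a\<in>(UNIV::bool set). \<Sum>b\<in>(UNIV::bool set). (if i = 0 then sg a b else 0) * h i a b)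
     = (h 0 False False + h 0 True True - h 0 False True - h (0::nat) True False :: real)"
proof -
  have "\<And>i. (\<Sum>a\<in>(UNIV::bool set). \<Sum>b\<in>(UNIV::bool set). (if i = 0 then sg a b else 0) * h i a b)
     = (if i = 0 then h 0 False False + h 0 True True - h 0 False True - h 0 True False else 0)"
    by (auto simp: UNIV_bool sg_def)
  then show ?thesis using assms by (simp add: sum.delta)
qed

definition P1 :: "nat \<Rightarrow> nat \<Rightarrow> real \<Rightarrow> real" where "P1 d p y = (\<Sum>j\<in>{0..p}. tau d p j * y ^ (2 * j))"
definition P2 :: "nat \<Rightarrow> nat \<Rightarrow> real \<Rightarrow> real" where "P2 d p y = (\<Sum>j\<in>{0..p}. tau d p j * y ^ (2 * (p - j)))"
definition Q1 :: "nat \<Rightarrow> nat \<Rightarrow> real \<Rightarrow> real" where "Q1 d p y = (\<Sum>j\<in>{0..p}. real j * tau d p j * y ^ (2 * j))"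
definition Q2 :: "nat \<Rightarrow> nat \<Rightarrow> real \<Rightarrow> real" where "Q2 d p y = (\<Sum>j\<in>{0..p}. real j * tau d p j * y ^ (2 * (p - j)))"
definition Dp :: "nat \<Rightarrow> nat \<Rightarrow> real \<Rightarrow> real" where "Dp d p y = y ^ (d - 2 * p) * P1 d p y + P2 d p y"
definition Ep :: "nat \<Rightarrow> nat \<Rightarrow> real \<Rightarrow> real" where
  "Ep d p y = (real d - 4 * real p) * y ^ (d - 2 * p) * P1 d p y + 2 * y ^ (d - 2 * p) * Q1 d p y - 2 * Q2 d p y"

lemma crit_main:
  assumes crit: "critical d p z w" and p1: "1 \<le> p" and dp: "4 * p \<le> d"
  shows "\<exists>y>0. y^2 * real d * Dp d p y = (1 + y^2) * (2 * real p * Dp d p y + Ep d p y) \<and>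
     (y = 1 \<longrightarrow> z = 1/4 \<and> (\<forall>j\<in>{1..p}. \<forall>a b. w j a b = tau d p j / (4 * real (d choose p) ^ 2)))"
proof -
  have int: "interiorK p z w" and dz: "((\<lambda>t. phi d p t w) has_real_derivative 0) (at z)"
    and dw: "\<And>j a b. j \<in> {1..p} \<Longrightarrow> ((\<lambda>t. phi d p z (upd w j a b t)) has_real_derivative 0) (at (w j a b))"
    using crit unfolding critical_def by auto
  have z1: "0 < z" and z2: "z < 1/2" and cpos: "\<And>j a b. j \<in> {0..p} \<Longrightarrow> 0 < zc p z w j a b"
    using int_pos[OF int] by auto
  have d2p: "2 * p < d" using p1 dp by linarith
  define A where "A = Afun d p z w"
  define B where "B = real d / 2 - A"
  have AB: "0 < A \<and> 0 < real d / 2 - A" unfolding A_def by (rule AB_pos[OF z1 z2 _ d2p]) (use cpos in auto)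
  then have A0: "0 < A" and B0: "0 < B" unfolding B_def by auto
  have AB': "0 < Afun d p z w" "Afun d p z w * 2 < real d" using AB unfolding A_def by auto
  define c where "c = zc p z w"
  have cp: "\<And>j a b. j \<in> {0..p} \<Longrightarrow> 0 < c j a b" using cpos unfolding c_def by auto
  have taup: "\<And>j. j \<le> p \<Longrightarrow> 0 < tau d p j" using tau_pos d2p by simp
  have cw: "\<And>j a b. j \<in> {1..p} \<Longrightarrow> c j a b = w j a b" unfolding c_def zc_def by auto
  have Dz: "((\<lambda>t. phi d p t w) has_real_derivative ((real d - 4 * real p) * (ln A - ln (real d / 2 - A)) +
      (\<Sum>i\<in>{0..p}. \<Sum>a\<in>UNIV. \<Sum>b\<in>UNIV. (if i = 0 then sg a b else 0) * (ln (tau d p i) - ln (zc p z w i a b) - 1)))) (at z)"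
  proof (rule L_deriv)
    show "\<And>t. Afun d p t w = A + (t - z) * (real d - 4 * real p)" unfolding A_def by (rule Afun_shiftz)
    show "\<And>t i a b. zc p t w i a b = zc p z w i a b + (t - z) * (if i = 0 then sg a b else 0)" by (rule zc_shiftz)
  qed (use AB cpos in auto)
  have ez: "(real d - 4 * real p) * (ln A - ln B) - ln (c 0 False False) - ln (c 0 True True) + ln (c 0 False True) + ln (c 0 True False) = 0"
  proof -
    have "(real d - 4 * real p) * (ln A - ln (real d / 2 - A)) +
      (\<Sum>i\<in>{0..p}. \<Sum>a\<in>UNIV. \<Sum>b\<in>UNIV. (if i = 0 then sg a b else 0) * (ln (tau d p i) - ln (zc p z w i a b) - 1)) = 0"
      by (rule DERIV_unique[OF Dz dz])
    moreover have "(\<Sum>i\<in>{0..p}. \<Sum>a\<in>UNIV. \<Sum>b\<in>UNIV. (if i = 0 then sg a b else 0) * (ln (tau d p i) - ln (zc p z w i a b) - 1))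
      = (ln (tau d p 0) - ln (zc p z w 0 False False) - 1) + (ln (tau d p 0) - ln (zc p z w 0 True True) - 1)
        - (ln (tau d p 0) - ln (zc p z w 0 False True) - 1) - (ln (tau d p 0) - ln (zc p z w 0 True False) - 1)"
      by (rule sum_z_delta) auto
    ultimately show ?thesis unfolding B_def c_def by simp
  qed
  have ew: "real j * sg a b * (ln A - ln B) + ln (tau d p j) - ln (c j a b) - ln (tau d p 0) + ln (c 0 a b) = 0"
    if j: "j \<in> {1..p}" for j a b
  proof -
    have Dw: "((\<lambda>t. phi d p z (upd w j a b t)) has_real_derivative ((real j * sg a b) * (ln A - ln (real d / 2 - A)) +
      (\<Sum>i\<in>{0..p}. \<Sum>a'\<in>UNIV. \<Sum>b'\<in>UNIV. ((if i = j \<and> a' = a \<and> b' = b then 1 else 0) - (if i = 0 \<and> a' = a \<and> b' = b then 1 else 0))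
          * (ln (tau d p i) - ln (zc p z w i a' b') - 1)))) (at (w j a b))"
      by (rule L_deriv) (use j in \<open>auto simp: A_def Afun_upd zc_upd cpos AB'\<close>)
    have "(real j * sg a b) * (ln A - ln (real d / 2 - A)) +
      (\<Sum>i\<in>{0..p}. \<Sum>a'\<in>UNIV. \<Sum>b'\<in>UNIV. ((if i = j \<and> a' = a \<and> b' = b then 1 else 0) - (if i = 0 \<and> a' = a \<and> b' = b then 1 else 0))
          * (ln (tau d p i) - ln (zc p z w i a' b') - 1)) = 0"
      by (rule DERIV_unique[OF Dw dw[OF j]])
    moreover have "(\<Sum>i\<in>{0..p}. \<Sum>a'\<in>UNIV. \<Sum>b'\<in>UNIV. ((if i = j \<and> a' = a \<and> b' = b then 1 else 0) - (if i = 0 \<and> a' = a \<and> b' = b then 1 else 0))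
          * (ln (tau d p i) - ln (zc p z w i a' b') - 1))
        = (ln (tau d p j) - ln (zc p z w j a b) - 1) - (ln (tau d p 0) - ln (zc p z w 0 a b) - 1)"
      using j by (simp add: left_diff_distrib sum_subtractf sum3_delta)
    ultimately show ?thesis unfolding B_def c_def by simp
  qed
  define r where "r = ln A - ln B"
  define y where "y = exp (r / 2)"
  define t0 where "t0 = tau d p 0"
  have t0p: "0 < t0" unfolding t0_def using taup by simp
  have y0: "0 < y" unfolding y_def by simp
  have ey: "exp (real k * r) = y ^ (2 * k)" for k
  proof -
    have "y ^ (2 * k) = exp (real (2 * k) * (r / 2))" unfolding y_def by (rule exp_of_nat_mult[symmetric])
    then show ?thesis by simp
  qed
  have y2: "y ^ 2 = A / B"
  proof -
    have "y ^ 2 = exp r" using ey[of 1] by simp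
    then show ?thesis unfolding r_def using A0 B0 by (simp add: exp_diff)
  qed
  have rel1: "c j a a = c 0 a a * tau d p j / t0 * y ^ (2 * j)" if j: "j \<in> {0..p}" for j a
  proof (cases "j = 0")
    case True then show ?thesis using t0p unfolding t0_def by simp
  next
    case False
    then have j1: "j \<in> {1..p}" using j by auto
    have e: "real j * (ln A - ln B) + ln (tau d p j) - ln (c j a a) - ln (tau d p 0) + ln (c 0 a a) = 0"
      using ew[OF j1, of a a] by (simp add: sg_def)
    have "ln (c j a a) = ln (c 0 a a) + ln (tau d p j) - ln t0 + real j * r"
      using e unfolding r_def t0_def by linarith
    then have "c j a a = c 0 a a * tau d p j / t0 * exp (real j * r)"
      by (intro exp_eq) (use cp taup j t0p in auto)
    then show ?thesis by (simp add: ey)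
  qed
  have rel2: "c j a b * y ^ (2 * j) = c 0 a b * tau d p j / t0" if j: "j \<in> {0..p}" and ab: "a \<noteq> b" for j a b
  proof (cases "j = 0")
    case True then show ?thesis using t0p unfolding t0_def by simp
  next
    case False
    then have j1: "j \<in> {1..p}" using j by auto
    have e: "- (real j * (ln A - ln B)) + ln (tau d p j) - ln (c j a b) - ln (tau d p 0) + ln (c 0 a b) = 0"
      using ew[OF j1, of a b] ab by (simp add: sg_def)
    have "ln (c j a b) = ln (c 0 a b) + ln (tau d p j) - ln t0 + (- (real j * r))"
      using e unfolding r_def t0_def by linarith
    then have "c j a b = c 0 a b * tau d p j / t0 * exp (- (real j * r))"
      by (intro exp_eq) (use cp taup j t0p in auto)
    then have "c j a b * exp (real j * r) = c 0 a b * tau d p j / t0 * (exp (- (real j * r)) * exp (real j * r))"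
      by simp
    also have "exp (- (real j * r)) * exp (real j * r) = 1" by (simp add: exp_minus_inverse mult.commute)
    finally show ?thesis by (simp add: ey)
  qed
  have c0: "c 0 a a = z - (\<Sum>j\<in>{1..p}. w j a a)" for a by (simp add: c_def zc_def)
  have c0': "c 0 a b = 1/2 - z - (\<Sum>j\<in>{1..p}. w j a b)" if "a \<noteq> b" for a b using that by (simp add: c_def zc_def)
  have split0: "(\<Sum>j\<in>{0..p}. f j) = f 0 + (\<Sum>j\<in>{1..p}. f j)" for f :: "nat \<Rightarrow> real"
    by (simp add: sum.atLeast_Suc_atMost)
  have sumcw: "(\<Sum>j\<in>{1..p}. c j a b) = (\<Sum>j\<in>{1..p}. w j a b)" for a b using cw by (intro sum.cong) auto
  have zs: "z = (\<Sum>j\<in>{0..p}. c j a a)" for a using split0[of "\<lambda>j. c j a a"] sumcw[of a a] c0[of a] by simp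
  have hs: "1/2 - z = (\<Sum>j\<in>{0..p}. c j a b)" if "a \<noteq> b" for a b
    using split0[of "\<lambda>j. c j a b"] sumcw[of a b] c0'[OF that] by simp
  have pw: "y ^ (2 * p) = y ^ (2 * j) * y ^ (2 * (p - j))" if "j \<le> p" for j
  proof -
    have "2 * p = 2 * j + 2 * (p - j)" using that by simp
    then show ?thesis by (metis power_add)
  qed
  have zP: "z = c 0 a a / t0 * P1 d p y" for a
  proof -
    have "(\<Sum>j\<in>{0..p}. c j a a) = (\<Sum>j\<in>{0..p}. c 0 a a / t0 * (tau d p j * y ^ (2 * j)))"
    proof (rule sum.cong[OF refl])
      fix j assume "j \<in> {0..p}"
      then show "c j a a = c 0 a a / t0 * (tau d p j * y ^ (2 * j))" using rel1[of j a] by simp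
    qed
    then show ?thesis using zs[of a] unfolding P1_def by (simp add: sum_distrib_left)
  qed
  have hP: "y ^ (2 * p) * (1/2 - z) = c 0 a b / t0 * P2 d p y" if ab: "a \<noteq> b" for a b
  proof -
    have "y ^ (2 * p) * (1/2 - z) = (\<Sum>j\<in>{0..p}. y ^ (2 * p) * c j a b)" using hs[OF ab] by (simp add: sum_distrib_left)
    also have "\<dots> = (\<Sum>j\<in>{0..p}. c 0 a b / t0 * (tau d p j * y ^ (2 * (p - j))))"
    proof (rule sum.cong[OF refl])
      fix j assume j: "j \<in> {0..p}"
      have "y ^ (2 * p) * c j a b = (c j a b * y ^ (2 * j)) * y ^ (2 * (p - j))" using pw[of j] j by simp
      also have "\<dots> = c 0 a b / t0 * (tau d p j * y ^ (2 * (p - j)))" using rel2[OF j ab] by simp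
      finally show "y ^ (2 * p) * c j a b = c 0 a b / t0 * (tau d p j * y ^ (2 * (p - j)))" .
    qed
    finally show ?thesis unfolding P2_def by (simp add: sum_distrib_left)
  qed
  have P1pos: "0 < P1 d p y" unfolding P1_def by (intro sum_pos) (use taup y0 in auto)
  have P2pos: "0 < P2 d p y" unfolding P2_def by (intro sum_pos) (use taup y0 in auto)
  define a0 where "a0 = c 0 False False"
  define b0 where "b0 = c 0 False True"
  have a0p: "0 < a0" and b0p: "0 < b0" unfolding a0_def b0_def using cp by auto
  have cTT: "c 0 True True = a0"
  proof -
    have "c 0 True True / t0 * P1 d p y = c 0 False False / t0 * P1 d p y" using zP[of True] zP[of False] by linarith
    then show ?thesis unfolding a0_def using P1pos t0p by simp
  qed
  have cTF: "c 0 True False = b0"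
  proof -
    have h1: "y ^ (2 * p) * (1/2 - z) = c 0 True False / t0 * P2 d p y" by (rule hP) simp
    have h2: "y ^ (2 * p) * (1/2 - z) = c 0 False True / t0 * P2 d p y" by (rule hP) simp
    have "c 0 True False / t0 * P2 d p y = c 0 False True / t0 * P2 d p y" using h1 h2 by linarith
    then show ?thesis unfolding b0_def using P2pos t0p by simp
  qed
  have ab0: "a0 = b0 * y ^ (d - 4 * p)"
  proof -
    have "ln a0 = ln b0 + ln 1 - ln 1 + real (d - 4 * p) * (r / 2)"
      using ez dp unfolding a0_def b0_def cTT[unfolded a0_def] cTF[unfolded b0_def] r_def by (simp add: of_nat_diff)
    then have "a0 = b0 * 1 / 1 * exp (real (d - 4 * p) * (r / 2))" by (intro exp_eq) (use a0p b0p in auto)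
    moreover have "exp (real (d - 4 * p) * (r / 2)) = y ^ (d - 4 * p)" unfolding y_def by (rule exp_of_nat_mult)
    ultimately show ?thesis by simp
  qed
  have cjTT: "c j True True = c j False False" if "j \<in> {0..p}" for j
    using rel1[OF that, of True] rel1[OF that, of False] cTT unfolding a0_def by simp
  have cjTF: "c j True False = c j False True" if "j \<in> {0..p}" for j
  proof -
    have "c j True False * y ^ (2 * j) = c j False True * y ^ (2 * j)"
      using rel2[OF that, of True False] rel2[OF that, of False True] cTF unfolding b0_def by simp
    then show ?thesis using y0 by simp
  qed
  have Asum: "A = real p + (real d - 4 * real p) * z + 2 * (\<Sum>j\<in>{0..p}. real j * c j False False) - 2 * (\<Sum>j\<in>{0..p}. real j * c j False True)"
  proof -
    have "(\<Sum>j\<in>{1..p}. real j * (w j False False + w j True True - w j False True - w j True False))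
        = (\<Sum>j\<in>{0..p}. real j * (c j False False + c j True True - c j False True - c j True False))"
      using split0[of "\<lambda>j. real j * (c j False False + c j True True - c j False True - c j True False)"] cw
      by simp
    also have "\<dots> = (\<Sum>j\<in>{0..p}. 2 * (real j * c j False False) - 2 * (real j * c j False True))"
      by (rule sum.cong[OF refl]) (simp add: cjTT cjTF algebra_simps)
    finally show ?thesis unfolding A_def Afun_def by (simp add: sum_subtractf sum_distrib_left)
  qed
  have sQ1: "(\<Sum>j\<in>{0..p}. real j * c j False False) = a0 / t0 * Q1 d p y"
  proof -
    have "(\<Sum>j\<in>{0..p}. real j * c j False False) = (\<Sum>j\<in>{0..p}. a0 / t0 * (real j * tau d p j * y ^ (2 * j)))"
    proof (rule sum.cong[OF refl])
      fix j assume "j \<in> {0..p}"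
      then show "real j * c j False False = a0 / t0 * (real j * tau d p j * y ^ (2 * j))" using rel1[of j False] unfolding a0_def by simp
    qed
    then show ?thesis unfolding Q1_def by (simp add: sum_distrib_left)
  qed
  have sQ2: "y ^ (2 * p) * (\<Sum>j\<in>{0..p}. real j * c j False True) = b0 / t0 * Q2 d p y"
  proof -
    have "y ^ (2 * p) * (\<Sum>j\<in>{0..p}. real j * c j False True) = (\<Sum>j\<in>{0..p}. b0 / t0 * (real j * tau d p j * y ^ (2 * (p - j))))"
      unfolding sum_distrib_left
    proof (rule sum.cong[OF refl])
      fix j assume j: "j \<in> {0..p}"
      have "y ^ (2 * p) * (real j * c j False True) = real j * (c j False True * y ^ (2 * j)) * y ^ (2 * (p - j))" using pw[of j] j by simp
      also have "\<dots> = b0 / t0 * (real j * tau d p j * y ^ (2 * (p - j)))" using rel2[OF j, of False True] unfolding b0_def by simp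
      finally show "y ^ (2 * p) * (real j * c j False True) = b0 / t0 * (real j * tau d p j * y ^ (2 * (p - j)))" .
    qed
    then show ?thesis unfolding Q2_def by (simp add: sum_distrib_left)
  qed
  define bt where "bt = b0 / t0"
  define Y where "Y = y ^ (2 * p)"
  have Y0: "Y \<noteq> 0" unfolding Y_def using y0 by simp
  have ym: "y ^ (d - 2 * p) = Y * y ^ (d - 4 * p)"
  proof -
    have "d - 2 * p = 2 * p + (d - 4 * p)" using dp by simp
    then show ?thesis unfolding Y_def by (metis power_add)
  qed
  have zb: "z = bt * y ^ (d - 4 * p) * P1 d p y" using zP[of False] ab0 unfolding a0_def[symmetric] bt_def by simp
  have hb: "Y * (1/2 - z) = bt * P2 d p y" using hP[of False True] unfolding b0_def[symmetric] bt_def Y_def by simp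
  have E1: "bt * Dp d p y = Y / 2"
  proof -
    have "bt * Dp d p y = Y * (bt * y ^ (d - 4 * p) * P1 d p y) + bt * P2 d p y" unfolding Dp_def ym by (simp add: algebra_simps)
    also have "\<dots> = Y * z + Y * (1/2 - z)" using zb hb by simp
    finally show ?thesis by (simp add: algebra_simps)
  qed
  have E2: "Y * A = real p * Y + bt * Ep d p y"
  proof -
    have "Y * A = real p * Y + (real d - 4 * real p) * (Y * z) + 2 * Y * (a0 / t0 * Q1 d p y) - 2 * (b0 / t0 * Q2 d p y)"
      unfolding Asum sQ1[symmetric] sQ2[symmetric] Y_def by (simp add: algebra_simps)
    also have "\<dots> = real p * Y + bt * Ep d p y"
      unfolding Ep_def ym zb bt_def ab0 using t0p by (simp add: field_simps)
    finally show ?thesis .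
  qed
  have E3: "A = y ^ 2 * (real d / 2 - A)" using y2 B0 unfolding B_def by (simp add: field_simps)
  have main: "y ^ 2 * real d * Dp d p y = (1 + y ^ 2) * (2 * real p * Dp d p y + Ep d p y)"
    by (rule alg_final[OF E1 E2 E3 Y0])
  have one: "z = 1/4 \<and> (\<forall>j\<in>{1..p}. \<forall>a b. w j a b = tau d p j / (4 * real (d choose p) ^ 2))" if y1: "y = 1"
  proof -
    have ts: "(\<Sum>j\<in>{0..p}. tau d p j) = real (d choose p) ^ 2" by (rule tau_sum) (use d2p in simp)
    have P11: "P1 d p 1 = real (d choose p) ^ 2" unfolding P1_def using ts by simp
    have P21: "P2 d p 1 = real (d choose p) ^ 2" unfolding P2_def using ts by simp
    have ab1: "a0 = b0" using ab0 y1 by simp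
    have zz: "z = a0 / t0 * real (d choose p) ^ 2" using zP[of False] y1 P11 unfolding a0_def by simp
    have hh: "1/2 - z = a0 / t0 * real (d choose p) ^ 2" using hP[of False True] y1 P21 ab1 unfolding b0_def by simp
    have z4: "z = 1/4" using zz hh by linarith
    have Cp: "0 < real (d choose p)" using d2p by simp
    have at0: "a0 / t0 * real (d choose p) ^ 2 = 1/4" using zz z4 by linarith
    have at: "a0 / t0 = 1 / (4 * real (d choose p) ^ 2)" using at0 Cp t0p a0p by (simp add: field_simps)
    have "w j a b = tau d p j / (4 * real (d choose p) ^ 2)" if j: "j \<in> {1..p}" for j a b
    proof -
      have j0: "j \<in> {0..p}" using j by auto
      have "c j a b = a0 / t0 * tau d p j"
      proof (cases "a = b")
        case True
        have "c 0 a a = a0" using cTT unfolding a0_def by (cases a) auto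
        then show ?thesis using rel1[OF j0, of a] y1 True by simp
      next
        case False
        have "c 0 a b = b0" using cTF False unfolding b0_def by (cases a; cases b) auto
        then show ?thesis using rel2[OF j0 False] y1 ab1 by simp
      qed
      then show ?thesis using cw[OF j] at by simp
    qed
    then show ?thesis using z4 by blast
  qed
  show ?thesis using y0 main one by blast
qed

lemma pos_interior:
  assumes z1: "0 < z" and z2: "z < 1/2" and c: "\<And>j a b. j \<in> {0..p} \<Longrightarrow> 0 < zc p z w j a b"
  shows "interiorK p z w"
proof -
  define S where "S = insert z (insert (1/2 - z) ((\<lambda>x. zc p z w (fst x) (fst (snd x)) (snd (snd x))) ` ({0..p} \<times> (UNIV::bool set) \<times> (UNIV::bool set))))"
  have fS: "finite S" "S \<noteq> {}" unfolding S_def by auto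
  define m where "m = Min S"
  have "\<forall>x\<in>S. 0 < x" unfolding S_def using z1 z2 c by auto
  then have mpos: "0 < m" unfolding m_def using fS by (simp add: Min_gr_iff)
  have mz: "m \<le> z" "m \<le> 1/2 - z" unfolding m_def using fS by (auto intro!: Min_le simp: S_def)
  have mc: "m \<le> zc p z w j a b" if "j \<in> {0..p}" for j a b
  proof -
    have "zc p z w j a b \<in> S" unfolding S_def using that by (auto intro!: image_eqI[where x="(j, a, b)"])
    then show ?thesis unfolding m_def using fS by (auto intro!: Min_le)
  qed
  define e where "e = m / (real p + 2)"
  have epos: "0 < e" unfolding e_def using mpos by simp
  have p2: "real p + 2 \<noteq> 0" by linarith
  have "(real p + 2) * e = m" unfolding e_def using p2 by simp
  then have me: "m = real p * e + 2 * e" by (simp add: algebra_simps)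
  have pe: "0 \<le> real p * e" using epos by simp
  show ?thesis unfolding interiorK_def
  proof (intro exI[of _ e] conjI allI impI)
    show "0 < e" by (rule epos)
    fix z' w'
    assume h: "\<bar>z' - z\<bar> < e \<and> (\<forall>j\<in>{1..p}. \<forall>a b. \<bar>w' j a b - w j a b\<bar> < e)"
    then have hz: "\<bar>z' - z\<bar> < e" and hw: "\<And>j a b. j \<in> {1..p} \<Longrightarrow> \<bar>w' j a b - w j a b\<bar> < e" by auto
    have sw: "\<bar>(\<Sum>j\<in>{1..p}. w' j a b) - (\<Sum>j\<in>{1..p}. w j a b)\<bar> \<le> real p * e" for a b
    proof -
      have "\<bar>(\<Sum>j\<in>{1..p}. w' j a b) - (\<Sum>j\<in>{1..p}. w j a b)\<bar> = \<bar>\<Sum>j\<in>{1..p}. w' j a b - w j a b\<bar>"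
        by (simp add: sum_subtractf)
      also have "\<dots> \<le> (\<Sum>j\<in>{1..p}. \<bar>w' j a b - w j a b\<bar>)" by (rule sum_abs)
      also have "\<dots> \<le> (\<Sum>j\<in>{1..p}. e)" by (rule sum_mono) (use hw in \<open>auto intro: less_imp_le\<close>)
      also have "\<dots> = real p * e" by simp
      finally show ?thesis .
    qed
    have "0 \<le> zc p z' w' j a b" if j: "j \<in> {0..p}" for j a b
    proof (cases "j = 0")
      case True
      show ?thesis
      proof (cases "a = b")
        case True
        have "m \<le> z - (\<Sum>j\<in>{1..p}. w j a b)" using mc[of 0 a b] True by (simp add: zc_def)
        then show ?thesis using True \<open>j = 0\<close> hz sw[of a b] me epos by (simp add: zc_def abs_le_iff abs_less_iff)
      next
        case False
        have "m \<le> 1/2 - z - (\<Sum>j\<in>{1..p}. w j a b)" using mc[of 0 a b] False by (simp add: zc_def)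
        then show ?thesis using False \<open>j = 0\<close> hz sw[of a b] me epos by (simp add: zc_def abs_le_iff abs_less_iff)
      qed
    next
      case False
      then have j1: "j \<in> {1..p}" using j by auto
      have "m \<le> w j a b" using mc[OF j, of a b] False by (simp add: zc_def)
      moreover have "w j a b - e < w' j a b" using hw[OF j1, of a b] by (simp add: abs_less_iff)
      ultimately have "0 \<le> w' j a b" using me epos pe by linarith
      then show ?thesis using False by (simp add: zc_def)
    qed
    moreover have hz': "z - e < z'" "z' < z + e" using hz by (auto simp: abs_less_iff)
    moreover have "0 \<le> z'" "z' \<le> 1/2" using hz' mz me epos pe by linarith+
    ultimately show "inK p z' w'" unfolding inK_def by auto
  qed
qed

lemma star_crit:
  assumes p1: "1 \<le> p" and dp: "4 * p \<le> d"
  shows "critical d p (1/4) (\<lambda>j a b. tau d p j / (4 * real (d choose p) ^ 2))"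
proof -
  define K where "K = 4 * real (d choose p) ^ 2"
  define ws where "ws = (\<lambda>(j::nat) (a::bool) (b::bool). tau d p j / K)"
  have d2p: "2 * p < d" using p1 dp by linarith
  have Cp: "0 < real (d choose p)" using d2p by simp
  have Kp: "0 < K" unfolding K_def using Cp by simp
  have taup: "\<And>j. j \<le> p \<Longrightarrow> 0 < tau d p j" using tau_pos d2p by simp
  have ts: "(\<Sum>j\<in>{0..p}. tau d p j) = real (d choose p) ^ 2" by (rule tau_sum) (use d2p in simp)
  have ts1: "(\<Sum>j\<in>{1..p}. tau d p j) = real (d choose p) ^ 2 - tau d p 0"
    using ts by (simp add: sum.atLeast_Suc_atMost)
  have sws: "(\<Sum>j\<in>{1..p}. ws j a b) = (real (d choose p) ^ 2 - tau d p 0) / K" for a b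
    unfolding ws_def using ts1 by (simp add: sum_divide_distrib[symmetric])
  have q: "1/4 = real (d choose p) ^ 2 / K" unfolding K_def using Cp by simp
  have zcs: "zc p (1/4) ws j a b = tau d p j / K" if "j \<in> {0..p}" for j a b
  proof (cases "j = 0")
    case True
    have "1/4 - (real (d choose p) ^ 2 - tau d p 0) / K = tau d p 0 / K" using q Kp by (simp add: field_simps)
    moreover have "1/2 - 1/4 - (real (d choose p) ^ 2 - tau d p 0) / K = tau d p 0 / K" using q Kp by (simp add: field_simps)
    moreover have "zc p (1/4) ws 0 a b = (if a = b then 1/4 - (real (d choose p) ^ 2 - tau d p 0) / K
        else 1/2 - 1/4 - (real (d choose p) ^ 2 - tau d p 0) / K)"
      unfolding zc_def sws by simp
    ultimately show ?thesis using True by simp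
  next
    case False
    then show ?thesis by (simp add: zc_def ws_def)
  qed
  have zcp: "0 < zc p (1/4) ws j a b" if "j \<in> {0..p}" for j a b
    using zcs[OF that] taup[of j] that Kp by simp
  have As: "Afun d p (1/4) ws = real d / 4" unfolding Afun_def ws_def by (simp add: algebra_simps)
  have int: "interiorK p (1/4) ws" by (rule pos_interior) (use zcp in auto)
  have AB': "0 < Afun d p (1/4) ws" "0 < real d / 2 - Afun d p (1/4) ws" unfolding As using d2p by auto
  have AB2: "Afun d p (1/4) ws * 2 < real d" using AB'(2) by simp
  have lnAB: "ln (Afun d p (1/4) ws) - ln (real d / 2 - Afun d p (1/4) ws) = 0" unfolding As by simp
  have hK: "ln (tau d p j) - ln (zc p (1/4) ws j a b) - 1 = ln K - 1" if "j \<in> {0..p}" for j a b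
    using zcs[OF that] taup[of j] that Kp by (simp add: ln_div)
  have Dz: "((\<lambda>t. phi d p t ws) has_real_derivative ((real d - 4 * real p) * (ln (Afun d p (1/4) ws) - ln (real d / 2 - Afun d p (1/4) ws)) +
      (\<Sum>i\<in>{0..p}. \<Sum>a\<in>UNIV. \<Sum>b\<in>UNIV. (if i = 0 then sg a b else 0) * (ln (tau d p i) - ln (zc p (1/4) ws i a b) - 1)))) (at (1/4))"
  proof (rule L_deriv)
    show "\<And>t. Afun d p t ws = Afun d p (1/4) ws + (t - 1/4) * (real d - 4 * real p)" by (rule Afun_shiftz)
    show "\<And>t i a b. zc p t ws i a b = zc p (1/4) ws i a b + (t - 1/4) * (if i = 0 then sg a b else 0)" by (rule zc_shiftz)
  qed (use AB' zcp in auto)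
  have sz: "(\<Sum>i\<in>{0..p}. \<Sum>a\<in>UNIV. \<Sum>b\<in>UNIV. (if i = 0 then sg a b else 0) * (ln (tau d p i) - ln (zc p (1/4) ws i a b) - 1))
      = (ln (tau d p 0) - ln (zc p (1/4) ws 0 False False) - 1) + (ln (tau d p 0) - ln (zc p (1/4) ws 0 True True) - 1)
        - (ln (tau d p 0) - ln (zc p (1/4) ws 0 False True) - 1) - (ln (tau d p 0) - ln (zc p (1/4) ws 0 True False) - 1)"
    by (rule sum_z_delta) auto
  have dz: "((\<lambda>t. phi d p t ws) has_real_derivative 0) (at (1/4))"
    using Dz unfolding sz lnAB hK[of 0, simplified] by simp
  have dw: "((\<lambda>t. phi d p (1/4) (upd ws j a b t)) has_real_derivative 0) (at (ws j a b))" if j: "j \<in> {1..p}" for j a b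
  proof -
    have Dw: "((\<lambda>t. phi d p (1/4) (upd ws j a b t)) has_real_derivative ((real j * sg a b) * (ln (Afun d p (1/4) ws) - ln (real d / 2 - Afun d p (1/4) ws)) +
      (\<Sum>i\<in>{0..p}. \<Sum>a'\<in>UNIV. \<Sum>b'\<in>UNIV. ((if i = j \<and> a' = a \<and> b' = b then 1 else 0) - (if i = 0 \<and> a' = a \<and> b' = b then 1 else 0))
          * (ln (tau d p i) - ln (zc p (1/4) ws i a' b') - 1)))) (at (ws j a b))"
      by (rule L_deriv) (use j in \<open>auto simp: Afun_upd zc_upd zcp AB' AB2\<close>)
    moreover have "(\<Sum>i\<in>{0..p}. \<Sum>a'\<in>UNIV. \<Sum>b'\<in>UNIV. ((if i = j \<and> a' = a \<and> b' = b then 1 else 0) - (if i = 0 \<and> a' = a \<and> b' = b then 1 else 0))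
          * (ln (tau d p i) - ln (zc p (1/4) ws i a' b') - 1))
        = (ln (tau d p j) - ln (zc p (1/4) ws j a b) - 1) - (ln (tau d p 0) - ln (zc p (1/4) ws 0 a b) - 1)"
      using j by (simp add: left_diff_distrib sum_subtractf sum3_delta)
    moreover have "(ln (tau d p j) - ln (zc p (1/4) ws j a b) - 1) - (ln (tau d p 0) - ln (zc p (1/4) ws 0 a b) - 1) = 0"
      using hK[of j a b] hK[of 0 a b] j by simp
    ultimately show ?thesis unfolding lnAB by simp
  qed
  have "critical d p (1/4) ws" unfolding critical_def using int dz dw by blast
  then show ?thesis unfolding ws_def K_def .
qed

lemma taus_6_1:
  "tau 6 1 0 = 30 \<and> tau 6 1 1 = 6"
  by (simp add: tau_def binomial_fact' fact_numeral)

lemma poly_6_1: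
  fixes y :: real
  assumes y: "0 < y" and h: "y^2 * real 6 * Dp 6 1 y = (1 + y^2) * (2 * real 1 * Dp 6 1 y + Ep 6 1 y)"
  shows "y = 1"
proof -
  have S: "{0..1::nat} = {0,1}" by auto
  have P1: "P1 6 1 y = 30 + 6 * y ^ 2" unfolding P1_def S using taus_6_1 by simp
  have P2: "P2 6 1 y = 30 * y ^ 2 + 6" unfolding P2_def S using taus_6_1 by simp
  have Q1: "Q1 6 1 y = 6 * y ^ 2" unfolding Q1_def S using taus_6_1 by simp
  have Q2: "Q2 6 1 y = 6" unfolding Q2_def S using taus_6_1 by simp
  have D: "Dp 6 1 y = y ^ 4 * (30 + 6 * y ^ 2) + (30 * y ^ 2 + 6)" unfolding Dp_def P1 P2 by simp
  have E: "Ep 6 1 y = 2 * y ^ 4 * (30 + 6 * y ^ 2) + 2 * y ^ 4 * (6 * y ^ 2) - 2 * (6)" unfolding Ep_def P1 Q1 Q2 by simp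
  have h2: "y^2 * 6 * (y ^ 4 * (30 + 6 * y ^ 2) + (30 * y ^ 2 + 6)) = (1 + y^2) * (2 * 1 * (y ^ 4 * (30 + 6 * y ^ 2) + (30 * y ^ 2 + 6)) + (2 * y ^ 4 * (30 + 6 * y ^ 2) + 2 * y ^ 4 * (6 * y ^ 2) - 2 * (6)))"
    using h unfolding D E by simp
  have cpos: "0 < 2 * y ^ 1 + 1 * (((y - 1) ^ 2) ^ 1 * y ^ 0)"
  proof -
    have t0: "0 < 2 * y ^ 1" using y by simp
    have t1: "0 \<le> 1 * (((y - 1) ^ 2) ^ 1 * y ^ 0)" using y by (intro mult_nonneg_nonneg zero_le_power2 zero_le_power) auto
    show ?thesis using t0 t1 by linarith
  qed
  have z: "(y - 1) * y ^ 2 * (24 * ((1 + y) * (2 * y ^ 1 + 1 * (((y - 1) ^ 2) ^ 1 * y ^ 0)))) = 0" using h2 by algebra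
  have nz: "1 + y \<noteq> 0" "(2 * y ^ 1 + 1 * (((y - 1) ^ 2) ^ 1 * y ^ 0)) \<noteq> 0" "y ^ 2 \<noteq> 0" using y cpos by auto
  then show ?thesis using z by simp
qed

lemma taus_10_2:
  "tau 10 2 0 = 1260 \<and> tau 10 2 1 = 720 \<and> tau 10 2 2 = 45"
  by (simp add: tau_def binomial_fact' fact_numeral)

lemma poly_10_2:
  fixes y :: real
  assumes y: "0 < y" and h: "y^2 * real 10 * Dp 10 2 y = (1 + y^2) * (2 * real 2 * Dp 10 2 y + Ep 10 2 y)"
  shows "y = 1"
proof -
  have S: "{0..2::nat} = {0,1,2}" by auto
  have P1: "P1 10 2 y = 1260 + 720 * y ^ 2 + 45 * y ^ 4" unfolding P1_def S using taus_10_2 by simp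
  have P2: "P2 10 2 y = 1260 * y ^ 4 + 720 * y ^ 2 + 45" unfolding P2_def S using taus_10_2 by simp
  have Q1: "Q1 10 2 y = 720 * y ^ 2 + 90 * y ^ 4" unfolding Q1_def S using taus_10_2 by simp
  have Q2: "Q2 10 2 y = 720 * y ^ 2 + 90" unfolding Q2_def S using taus_10_2 by simp
  have D: "Dp 10 2 y = y ^ 6 * (1260 + 720 * y ^ 2 + 45 * y ^ 4) + (1260 * y ^ 4 + 720 * y ^ 2 + 45)" unfolding Dp_def P1 P2 by simp
  have E: "Ep 10 2 y = 2 * y ^ 6 * (1260 + 720 * y ^ 2 + 45 * y ^ 4) + 2 * y ^ 6 * (720 * y ^ 2 + 90 * y ^ 4) - 2 * (720 * y ^ 2 + 90)" unfolding Ep_def P1 Q1 Q2 by simp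
  have h2: "y^2 * 10 * (y ^ 6 * (1260 + 720 * y ^ 2 + 45 * y ^ 4) + (1260 * y ^ 4 + 720 * y ^ 2 + 45)) = (1 + y^2) * (2 * 2 * (y ^ 6 * (1260 + 720 * y ^ 2 + 45 * y ^ 4) + (1260 * y ^ 4 + 720 * y ^ 2 + 45)) + (2 * y ^ 6 * (1260 + 720 * y ^ 2 + 45 * y ^ 4) + 2 * y ^ 6 * (720 * y ^ 2 + 90 * y ^ 4) - 2 * (720 * y ^ 2 + 90)))"
    using h unfolding D E by simp
  have cpos: "0 < 28 * y ^ 3 + 102 * (((y - 1) ^ 2) ^ 1 * y ^ 2) + 66 * (((y - 1) ^ 2) ^ 2 * y ^ 1) + 11 * (((y - 1) ^ 2) ^ 3 * y ^ 0)"
  proof -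
    have t0: "0 < 28 * y ^ 3" using y by simp
    have t1: "0 \<le> 102 * (((y - 1) ^ 2) ^ 1 * y ^ 2)" using y by (intro mult_nonneg_nonneg zero_le_power2 zero_le_power) auto
    have t2: "0 \<le> 66 * (((y - 1) ^ 2) ^ 2 * y ^ 1)" using y by (intro mult_nonneg_nonneg zero_le_power2 zero_le_power) auto
    have t3: "0 \<le> 11 * (((y - 1) ^ 2) ^ 3 * y ^ 0)" using y by (intro mult_nonneg_nonneg zero_le_power2 zero_le_power) auto
    show ?thesis using t0 t1 t2 t3 by linarith
  qed
  have z: "(y - 1) * y ^ 2 * (90 * ((1 + y) * (28 * y ^ 3 + 102 * (((y - 1) ^ 2) ^ 1 * y ^ 2) + 66 * (((y - 1) ^ 2) ^ 2 * y ^ 1) + 11 * (((y - 1) ^ 2) ^ 3 * y ^ 0)))) = 0" using h2 by algebra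
  have nz: "1 + y \<noteq> 0" "(28 * y ^ 3 + 102 * (((y - 1) ^ 2) ^ 1 * y ^ 2) + 66 * (((y - 1) ^ 2) ^ 2 * y ^ 1) + 11 * (((y - 1) ^ 2) ^ 3 * y ^ 0)) \<noteq> 0" "y ^ 2 \<noteq> 0" using y cpos by auto
  then show ?thesis using z by simp
qed

lemma taus_13_3:
  "tau 13 3 0 = 34320 \<and> tau 13 3 1 = 38610 \<and> tau 13 3 2 = 8580 \<and> tau 13 3 3 = 286"
  by (simp add: tau_def binomial_fact' fact_numeral)

lemma poly_13_3:
  fixes y :: real
  assumes y: "0 < y" and h: "y^2 * real 13 * Dp 13 3 y = (1 + y^2) * (2 * real 3 * Dp 13 3 y + Ep 13 3 y)"
  shows "y = 1"
proof -
  have S: "{0..3::nat} = {0,1,2,3}" by auto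
  have P1: "P1 13 3 y = 34320 + 38610 * y ^ 2 + 8580 * y ^ 4 + 286 * y ^ 6" unfolding P1_def S using taus_13_3 by simp
  have P2: "P2 13 3 y = 34320 * y ^ 6 + 38610 * y ^ 4 + 8580 * y ^ 2 + 286" unfolding P2_def S using taus_13_3 by simp
  have Q1: "Q1 13 3 y = 38610 * y ^ 2 + 17160 * y ^ 4 + 858 * y ^ 6" unfolding Q1_def S using taus_13_3 by simp
  have Q2: "Q2 13 3 y = 38610 * y ^ 4 + 17160 * y ^ 2 + 858" unfolding Q2_def S using taus_13_3 by simp
  have D: "Dp 13 3 y = y ^ 7 * (34320 + 38610 * y ^ 2 + 8580 * y ^ 4 + 286 * y ^ 6) + (34320 * y ^ 6 + 38610 * y ^ 4 + 8580 * y ^ 2 + 286)" unfolding Dp_def P1 P2 by simp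
  have E: "Ep 13 3 y = 1 * y ^ 7 * (34320 + 38610 * y ^ 2 + 8580 * y ^ 4 + 286 * y ^ 6) + 2 * y ^ 7 * (38610 * y ^ 2 + 17160 * y ^ 4 + 858 * y ^ 6) - 2 * (38610 * y ^ 4 + 17160 * y ^ 2 + 858)" unfolding Ep_def P1 Q1 Q2 by simp
  have h2: "y^2 * 13 * (y ^ 7 * (34320 + 38610 * y ^ 2 + 8580 * y ^ 4 + 286 * y ^ 6) + (34320 * y ^ 6 + 38610 * y ^ 4 + 8580 * y ^ 2 + 286)) = (1 + y^2) * (2 * 3 * (y ^ 7 * (34320 + 38610 * y ^ 2 + 8580 * y ^ 4 + 286 * y ^ 6) + (34320 * y ^ 6 + 38610 * y ^ 4 + 8580 * y ^ 2 + 286)) + (1 * y ^ 7 * (34320 + 38610 * y ^ 2 + 8580 * y ^ 4 + 286 * y ^ 6) + 2 * y ^ 7 * (38610 * y ^ 2 + 17160 * y ^ 4 + 858 * y ^ 6) - 2 * (38610 * y ^ 4 + 17160 * y ^ 2 + 858)))"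
    using h unfolding D E by simp
  have cpos: "0 < 1342 * y ^ 5 + 5030 * (((y - 1) ^ 2) ^ 1 * y ^ 4) + 5089 * (((y - 1) ^ 2) ^ 2 * y ^ 3) + 2278 * (((y - 1) ^ 2) ^ 3 * y ^ 2) + 517 * (((y - 1) ^ 2) ^ 4 * y ^ 1) + 47 * (((y - 1) ^ 2) ^ 5 * y ^ 0)"
  proof -
    have t0: "0 < 1342 * y ^ 5" using y by simp
    have t1: "0 \<le> 5030 * (((y - 1) ^ 2) ^ 1 * y ^ 4)" using y by (intro mult_nonneg_nonneg zero_le_power2 zero_le_power) auto
    have t2: "0 \<le> 5089 * (((y - 1) ^ 2) ^ 2 * y ^ 3)" using y by (intro mult_nonneg_nonneg zero_le_power2 zero_le_power) auto
    have t3: "0 \<le> 2278 * (((y - 1) ^ 2) ^ 3 * y ^ 2)" using y by (intro mult_nonneg_nonneg zero_le_power2 zero_le_power) auto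
    have t4: "0 \<le> 517 * (((y - 1) ^ 2) ^ 4 * y ^ 1)" using y by (intro mult_nonneg_nonneg zero_le_power2 zero_le_power) auto
    have t5: "0 \<le> 47 * (((y - 1) ^ 2) ^ 5 * y ^ 0)" using y by (intro mult_nonneg_nonneg zero_le_power2 zero_le_power) auto
    show ?thesis using t0 t1 t2 t3 t4 t5 by linarith
  qed
  have z: "(y - 1) * y ^ 2 * (286 * ((1342 * y ^ 5 + 5030 * (((y - 1) ^ 2) ^ 1 * y ^ 4) + 5089 * (((y - 1) ^ 2) ^ 2 * y ^ 3) + 2278 * (((y - 1) ^ 2) ^ 3 * y ^ 2) + 517 * (((y - 1) ^ 2) ^ 4 * y ^ 1) + 47 * (((y - 1) ^ 2) ^ 5 * y ^ 0)))) = 0" using h2 by algebra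
  have nz: "1 + y \<noteq> 0" "(1342 * y ^ 5 + 5030 * (((y - 1) ^ 2) ^ 1 * y ^ 4) + 5089 * (((y - 1) ^ 2) ^ 2 * y ^ 3) + 2278 * (((y - 1) ^ 2) ^ 3 * y ^ 2) + 517 * (((y - 1) ^ 2) ^ 4 * y ^ 1) + 47 * (((y - 1) ^ 2) ^ 5 * y ^ 0)) \<noteq> 0" "y ^ 2 \<noteq> 0" using y cpos by auto
  then show ?thesis using z by simp
qed

lemma taus_14_3:
  "tau 14 3 0 = 60060 \<and> tau 14 3 1 = 60060 \<and> tau 14 3 2 = 12012 \<and> tau 14 3 3 = 364"
  by (simp add: tau_def binomial_fact' fact_numeral)

lemma poly_14_3:
  fixes y :: real
  assumes y: "0 < y" and h: "y^2 * real 14 * Dp 14 3 y = (1 + y^2) * (2 * real 3 * Dp 14 3 y + Ep 14 3 y)"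
  shows "y = 1"
proof -
  have S: "{0..3::nat} = {0,1,2,3}" by auto
  have P1: "P1 14 3 y = 60060 + 60060 * y ^ 2 + 12012 * y ^ 4 + 364 * y ^ 6" unfolding P1_def S using taus_14_3 by simp
  have P2: "P2 14 3 y = 60060 * y ^ 6 + 60060 * y ^ 4 + 12012 * y ^ 2 + 364" unfolding P2_def S using taus_14_3 by simp
  have Q1: "Q1 14 3 y = 60060 * y ^ 2 + 24024 * y ^ 4 + 1092 * y ^ 6" unfolding Q1_def S using taus_14_3 by simp
  have Q2: "Q2 14 3 y = 60060 * y ^ 4 + 24024 * y ^ 2 + 1092" unfolding Q2_def S using taus_14_3 by simp
  have D: "Dp 14 3 y = y ^ 8 * (60060 + 60060 * y ^ 2 + 12012 * y ^ 4 + 364 * y ^ 6) + (60060 * y ^ 6 + 60060 * y ^ 4 + 12012 * y ^ 2 + 364)" unfolding Dp_def P1 P2 by simp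
  have E: "Ep 14 3 y = 2 * y ^ 8 * (60060 + 60060 * y ^ 2 + 12012 * y ^ 4 + 364 * y ^ 6) + 2 * y ^ 8 * (60060 * y ^ 2 + 24024 * y ^ 4 + 1092 * y ^ 6) - 2 * (60060 * y ^ 4 + 24024 * y ^ 2 + 1092)" unfolding Ep_def P1 Q1 Q2 by simp
  have h2: "y^2 * 14 * (y ^ 8 * (60060 + 60060 * y ^ 2 + 12012 * y ^ 4 + 364 * y ^ 6) + (60060 * y ^ 6 + 60060 * y ^ 4 + 12012 * y ^ 2 + 364)) = (1 + y^2) * (2 * 3 * (y ^ 8 * (60060 + 60060 * y ^ 2 + 12012 * y ^ 4 + 364 * y ^ 6) + (60060 * y ^ 6 + 60060 * y ^ 4 + 12012 * y ^ 2 + 364)) + (2 * y ^ 8 * (60060 + 60060 * y ^ 2 + 12012 * y ^ 4 + 364 * y ^ 6) + 2 * y ^ 8 * (60060 * y ^ 2 + 24024 * y ^ 4 + 1092 * y ^ 6) - 2 * (60060 * y ^ 4 + 24024 * y ^ 2 + 1092)))"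
    using h unfolding D E by simp
  have cpos: "0 < 12 * y ^ 5 + 950 * (((y - 1) ^ 2) ^ 1 * y ^ 4) + 1124 * (((y - 1) ^ 2) ^ 2 * y ^ 3) + 534 * (((y - 1) ^ 2) ^ 3 * y ^ 2) + 130 * (((y - 1) ^ 2) ^ 4 * y ^ 1) + 13 * (((y - 1) ^ 2) ^ 5 * y ^ 0)"
  proof -
    have t0: "0 < 12 * y ^ 5" using y by simp
    have t1: "0 \<le> 950 * (((y - 1) ^ 2) ^ 1 * y ^ 4)" using y by (intro mult_nonneg_nonneg zero_le_power2 zero_le_power) auto
    have t2: "0 \<le> 1124 * (((y - 1) ^ 2) ^ 2 * y ^ 3)" using y by (intro mult_nonneg_nonneg zero_le_power2 zero_le_power) auto
    have t3: "0 \<le> 534 * (((y - 1) ^ 2) ^ 3 * y ^ 2)" using y by (intro mult_nonneg_nonneg zero_le_power2 zero_le_power) auto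
    have t4: "0 \<le> 130 * (((y - 1) ^ 2) ^ 4 * y ^ 1)" using y by (intro mult_nonneg_nonneg zero_le_power2 zero_le_power) auto
    have t5: "0 \<le> 13 * (((y - 1) ^ 2) ^ 5 * y ^ 0)" using y by (intro mult_nonneg_nonneg zero_le_power2 zero_le_power) auto
    show ?thesis using t0 t1 t2 t3 t4 t5 by linarith
  qed
  have z: "(y - 1) * y ^ 2 * (1456 * ((1 + y) * (12 * y ^ 5 + 950 * (((y - 1) ^ 2) ^ 1 * y ^ 4) + 1124 * (((y - 1) ^ 2) ^ 2 * y ^ 3) + 534 * (((y - 1) ^ 2) ^ 3 * y ^ 2) + 130 * (((y - 1) ^ 2) ^ 4 * y ^ 1) + 13 * (((y - 1) ^ 2) ^ 5 * y ^ 0)))) = 0" using h2 by algebra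
  have nz: "1 + y \<noteq> 0" "(12 * y ^ 5 + 950 * (((y - 1) ^ 2) ^ 1 * y ^ 4) + 1124 * (((y - 1) ^ 2) ^ 2 * y ^ 3) + 534 * (((y - 1) ^ 2) ^ 3 * y ^ 2) + 130 * (((y - 1) ^ 2) ^ 4 * y ^ 1) + 13 * (((y - 1) ^ 2) ^ 5 * y ^ 0)) \<noteq> 0" "y ^ 2 \<noteq> 0" using y cpos by auto
  then show ?thesis using z by simp
qed

lemma taus_17_4:
  "tau 17 4 0 = 1701700 \<and> tau 17 4 1 = 2722720 \<and> tau 17 4 2 = 1113840 \<and> tau 17 4 3 = 123760 \<and> tau 17 4 4 = 2380"
  by (simp add: tau_def binomial_fact' fact_numeral)

lemma poly_17_4:
  fixes y :: real
  assumes y: "0 < y" and h: "y^2 * real 17 * Dp 17 4 y = (1 + y^2) * (2 * real 4 * Dp 17 4 y + Ep 17 4 y)"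
  shows "y = 1"
proof -
  have S: "{0..4::nat} = {0,1,2,3,4}" by auto
  have P1: "P1 17 4 y = 1701700 + 2722720 * y ^ 2 + 1113840 * y ^ 4 + 123760 * y ^ 6 + 2380 * y ^ 8" unfolding P1_def S using taus_17_4 by simp
  have P2: "P2 17 4 y = 1701700 * y ^ 8 + 2722720 * y ^ 6 + 1113840 * y ^ 4 + 123760 * y ^ 2 + 2380" unfolding P2_def S using taus_17_4 by simp
  have Q1: "Q1 17 4 y = 2722720 * y ^ 2 + 2227680 * y ^ 4 + 371280 * y ^ 6 + 9520 * y ^ 8" unfolding Q1_def S using taus_17_4 by simp
  have Q2: "Q2 17 4 y = 2722720 * y ^ 6 + 2227680 * y ^ 4 + 371280 * y ^ 2 + 9520" unfolding Q2_def S using taus_17_4 by simp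
  have D: "Dp 17 4 y = y ^ 9 * (1701700 + 2722720 * y ^ 2 + 1113840 * y ^ 4 + 123760 * y ^ 6 + 2380 * y ^ 8) + (1701700 * y ^ 8 + 2722720 * y ^ 6 + 1113840 * y ^ 4 + 123760 * y ^ 2 + 2380)" unfolding Dp_def P1 P2 by simp
  have E: "Ep 17 4 y = 1 * y ^ 9 * (1701700 + 2722720 * y ^ 2 + 1113840 * y ^ 4 + 123760 * y ^ 6 + 2380 * y ^ 8) + 2 * y ^ 9 * (2722720 * y ^ 2 + 2227680 * y ^ 4 + 371280 * y ^ 6 + 9520 * y ^ 8) - 2 * (2722720 * y ^ 6 + 2227680 * y ^ 4 + 371280 * y ^ 2 + 9520)" unfolding Ep_def P1 Q1 Q2 by simp
  have h2: "y^2 * 17 * (y ^ 9 * (1701700 + 2722720 * y ^ 2 + 1113840 * y ^ 4 + 123760 * y ^ 6 + 2380 * y ^ 8) + (1701700 * y ^ 8 + 2722720 * y ^ 6 + 1113840 * y ^ 4 + 123760 * y ^ 2 + 2380)) = (1 + y^2) * (2 * 4 * (y ^ 9 * (1701700 + 2722720 * y ^ 2 + 1113840 * y ^ 4 + 123760 * y ^ 6 + 2380 * y ^ 8) + (1701700 * y ^ 8 + 2722720 * y ^ 6 + 1113840 * y ^ 4 + 123760 * y ^ 2 + 2380)) + (1 * y ^ 9 * (1701700 + 2722720 * y ^ 2 + 1113840 * y ^ 4 + 123760 * y ^ 6 + 2380 * y ^ 8) + 2 * y ^ 9 * (2722720 * y ^ 2 + 2227680 * y ^ 4 + 371280 * y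 ^ 6 + 9520 * y ^ 8) - 2 * (2722720 * y ^ 6 + 2227680 * y ^ 4 + 371280 * y ^ 2 + 9520)))"
    using h unfolding D E by simp
  have cpos: "0 < 1540 * y ^ 7 + 25432 * (((y - 1) ^ 2) ^ 1 * y ^ 6) + 40810 * (((y - 1) ^ 2) ^ 2 * y ^ 5) + 29326 * (((y - 1) ^ 2) ^ 3 * y ^ 4) + 11979 * (((y - 1) ^ 2) ^ 4 * y ^ 3) + 2974 * (((y - 1) ^ 2) ^ 5 * y ^ 2) + 435 * (((y - 1) ^ 2) ^ 6 * y ^ 1) + 29 * (((y - 1) ^ 2) ^ 7 * y ^ 0)"
  proof -
    have t0: "0 < 1540 * y ^ 7" using y by simp
    have t1: "0 \<le> 25432 * (((y - 1) ^ 2) ^ 1 * y ^ 6)" using y by (intro mult_nonneg_nonneg zero_le_power2 zero_le_power) auto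
    have t2: "0 \<le> 40810 * (((y - 1) ^ 2) ^ 2 * y ^ 5)" using y by (intro mult_nonneg_nonneg zero_le_power2 zero_le_power) auto
    have t3: "0 \<le> 29326 * (((y - 1) ^ 2) ^ 3 * y ^ 4)" using y by (intro mult_nonneg_nonneg zero_le_power2 zero_le_power) auto
    have t4: "0 \<le> 11979 * (((y - 1) ^ 2) ^ 4 * y ^ 3)" using y by (intro mult_nonneg_nonneg zero_le_power2 zero_le_power) auto
    have t5: "0 \<le> 2974 * (((y - 1) ^ 2) ^ 5 * y ^ 2)" using y by (intro mult_nonneg_nonneg zero_le_power2 zero_le_power) auto
    have t6: "0 \<le> 435 * (((y - 1) ^ 2) ^ 6 * y ^ 1)" using y by (intro mult_nonneg_nonneg zero_le_power2 zero_le_power) auto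
    have t7: "0 \<le> 29 * (((y - 1) ^ 2) ^ 7 * y ^ 0)" using y by (intro mult_nonneg_nonneg zero_le_power2 zero_le_power) auto
    show ?thesis using t0 t1 t2 t3 t4 t5 t6 t7 by linarith
  qed
  have z: "(y - 1) * y ^ 2 * (7140 * ((1540 * y ^ 7 + 25432 * (((y - 1) ^ 2) ^ 1 * y ^ 6) + 40810 * (((y - 1) ^ 2) ^ 2 * y ^ 5) + 29326 * (((y - 1) ^ 2) ^ 3 * y ^ 4) + 11979 * (((y - 1) ^ 2) ^ 4 * y ^ 3) + 2974 * (((y - 1) ^ 2) ^ 5 * y ^ 2) + 435 * (((y - 1) ^ 2) ^ 6 * y ^ 1) + 29 * (((y - 1) ^ 2) ^ 7 * y ^ 0)))) = 0" using h2 by algebra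
  have nz: "1 + y \<noteq> 0" "(1540 * y ^ 7 + 25432 * (((y - 1) ^ 2) ^ 1 * y ^ 6) + 40810 * (((y - 1) ^ 2) ^ 2 * y ^ 5) + 29326 * (((y - 1) ^ 2) ^ 3 * y ^ 4) + 11979 * (((y - 1) ^ 2) ^ 4 * y ^ 3) + 2974 * (((y - 1) ^ 2) ^ 5 * y ^ 2) + 435 * (((y - 1) ^ 2) ^ 6 * y ^ 1) + 29 * (((y - 1) ^ 2) ^ 7 * y ^ 0)) \<noteq> 0" "y ^ 2 \<noteq> 0" using y cpos by auto
  then show ?thesis using z by simp
qed

theorem lemmaA2:
  fixes d p :: nat
  assumes "(d, p) \<in> {(6, 1), (10, 2), (13, 3), (14, 3), (17, 4)}"
  shows "critical d p (1/4) (\<lambda>j a b. tau d p j / (4 * real (d choose p) ^ 2))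
    \<and> (\<forall>z w. critical d p z w \<longrightarrow>
         z = 1/4 \<and> (\<forall>j\<in>{1..p}. \<forall>a b. w j a b = tau d p j / (4 * real (d choose p) ^ 2)))"
proof -
  have cs: "(d = 6 \<and> p = 1) \<or> (d = 10 \<and> p = 2) \<or> (d = 13 \<and> p = 3) \<or> (d = 14 \<and> p = 3) \<or> (d = 17 \<and> p = 4)"
    using assms by auto
  have p1: "1 \<le> p" and dp: "4 * p \<le> d" using cs by auto
  have poly: "y = 1" if y: "0 < y" and h: "y^2 * real d * Dp d p y = (1 + y^2) * (2 * real p * Dp d p y + Ep d p y)" for y :: real
    using cs
  proof (elim disjE conjE)
    assume "d = 6" "p = 1" then show ?thesis using poly_6_1[OF y] h by simp
  next
    assume "d = 10" "p = 2" then show ?thesis using poly_10_2[OF y] h by simp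
  next
    assume "d = 13" "p = 3" then show ?thesis using poly_13_3[OF y] h by simp
  next
    assume "d = 14" "p = 3" then show ?thesis using poly_14_3[OF y] h by simp
  next
    assume "d = 17" "p = 4" then show ?thesis using poly_17_4[OF y] h by simp
  qed
  show ?thesis
  proof
    show "critical d p (1/4) (\<lambda>j a b. tau d p j / (4 * real (d choose p) ^ 2))" by (rule star_crit[OF p1 dp])
    show "\<forall>z w. critical d p z w \<longrightarrow>
         z = 1/4 \<and> (\<forall>j\<in>{1..p}. \<forall>a b. w j a b = tau d p j / (4 * real (d choose p) ^ 2))"
    proof (intro allI impI)
      fix z w assume c: "critical d p z w"
      obtain y where y: "0 < y" and h: "y^2 * real d * Dp d p y = (1 + y^2) * (2 * real p * Dp d p y + Ep d p y)"
        and one: "y = 1 \<longrightarrow> z = 1/4 \<and> (\<forall>j\<in>{1..p}. \<forall>a b. w j a b = tau d p j / (4 * real (d choose p) ^ 2))"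
        using crit_main[OF c p1 dp] by blast
      show "z = 1/4 \<and> (\<forall>j\<in>{1..p}. \<forall>a b. w j a b = tau d p j / (4 * real (d choose p) ^ 2))"
        using one poly[OF y h] by blast
    qed
  qed
qed

end
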